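(* Every tree of diameter $5$ is odd-graceful.
   Context: A graph $G$ with $n$ edges is odd-graceful if there is an injective map $f:V(G)\to\{0,1,2,\dots,2n-1\}$ such that the set of induced edge weights $\{|f(x)-f(y)| : xy\in E(G)\}$ equals $\{1,3,5,\dots,2n-1\}$. *)

theory Defs
  imports Main
begin

definition simple_graph :: "'a set \<Rightarrow> 'a set set \<Rightarrow> bool" where
  "simple_graph V E \<longleftrightarrow> finite V \<and> (\<forall>e\<in>E. e \<subseteq> V \<and> card e = 2)"

definition is_walk :: "'a set \<Rightarrow> 'a set set \<Rightarrow> 'a list \<Rightarrow> bool" where
  "is_walk V E xs \<longleftrightarrow> xs \<noteq> [] \<and> set xs \<subseteq> V \<and>
     (\<forall>i. Suc i < length xs \<longrightarrow> {xs ! i, xs ! Suc i} \<in> E)"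

definition connected_graph :: "'a set \<Rightarrow> 'a set set \<Rightarrow> bool" where
  "connected_graph V E \<longleftrightarrow> V \<noteq> {} \<and>
     (\<forall>u\<in>V. \<forall>v\<in>V. \<exists>xs. is_walk V E xs \<and> hd xs = u \<and> last xs = v)"

definition is_cycle :: "'a set \<Rightarrow> 'a set set \<Rightarrow> 'a list \<Rightarrow> bool" where
  "is_cycle V E xs \<longleftrightarrow> length xs \<ge> 3 \<and> distinct xs \<and> is_walk V E xs \<and>
     {last xs, hd xs} \<in> E"

definition acyclic_graph :: "'a set \<Rightarrow> 'a set set \<Rightarrow> bool" where
  "acyclic_graph V E \<longleftrightarrow> \<not> (\<exists>xs. is_cycle V E xs)"

definition is_tree :: "'a set \<Rightarrow> 'a set set \<Rightarrow> bool" where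
  "is_tree V E \<longleftrightarrow> simple_graph V E \<and> connected_graph V E \<and> acyclic_graph V E"

definition graph_dist :: "'a set \<Rightarrow> 'a set set \<Rightarrow> 'a \<Rightarrow> 'a \<Rightarrow> nat" where
  "graph_dist V E u v = (LEAST n. \<exists>xs. is_walk V E xs \<and> hd xs = u \<and> last xs = v
                                       \<and> length xs = Suc n)"

definition diameter :: "'a set \<Rightarrow> 'a set set \<Rightarrow> nat" where
  "diameter V E = Max {graph_dist V E u v | u v. u \<in> V \<and> v \<in> V}"

definition odd_graceful :: "'a set \<Rightarrow> 'a set set \<Rightarrow> bool" where
  "odd_graceful V E \<longleftrightarrow>
     (\<exists>f :: 'a \<Rightarrow> nat. inj_on f V \<and> f ` V \<subseteq> {0 ..< 2 * card E} \<and>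
        {nat \<bar>int (f x) - int (f y)\<bar> | x y. {x, y} \<in> E}
          = {2 * k + 1 | k. k < card E})"

end

theory Submission
  imports Defs "HOL-Library.Product_Lexorder"
begin

lemma walk_rev:
  assumes "is_walk V E xs" shows "is_walk V E (rev xs)"
  unfolding is_walk_def
proof (intro conjI allI impI)
  show "rev xs \<noteq> []" "set (rev xs) \<subseteq> V" using assms by (auto simp: is_walk_def)
  fix i assume i: "Suc i < length (rev xs)"
  define j where "j = length xs - Suc (Suc i)"
  have j: "Suc j < length xs" using i by (simp add: j_def)
  have e: "rev xs ! i = xs ! Suc j" "rev xs ! Suc i = xs ! j"
    using i by (auto simp: rev_nth j_def Suc_diff_Suc)
  have "{xs ! j, xs ! Suc j} \<in> E" using assms j by (auto simp: is_walk_def)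
  then show "{rev xs ! i, rev xs ! Suc i} \<in> E" by (simp add: e insert_commute)
qed

lemma walk_snoc:
  assumes "is_walk V E xs" "y \<in> V" "{last xs, y} \<in> E"
  shows "is_walk V E (xs @ [y])"
  unfolding is_walk_def
proof (intro conjI allI impI)
  show "xs @ [y] \<noteq> []" "set (xs @ [y]) \<subseteq> V" using assms by (auto simp: is_walk_def)
  fix i assume i: "Suc i < length (xs @ [y])"
  have ne: "xs \<noteq> []" using assms by (simp add: is_walk_def)
  show "{(xs @ [y]) ! i, (xs @ [y]) ! Suc i} \<in> E"
  proof (cases "Suc i < length xs")
    case True then show ?thesis using assms by (auto simp: is_walk_def nth_append)
  next
    case False
    then have "i = length xs - 1" using i by simp
    then show ?thesis using assms ne by (auto simp: nth_append last_conv_nth)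
  qed
qed

lemma walk_Cons:
  assumes "is_walk V E xs" "x \<in> V" "{x, hd xs} \<in> E"
  shows "is_walk V E (x # xs)"
  unfolding is_walk_def
proof (intro conjI allI impI)
  show "x # xs \<noteq> []" "set (x # xs) \<subseteq> V" using assms by (auto simp: is_walk_def)
  fix i assume i: "Suc i < length (x # xs)"
  have ne: "xs \<noteq> []" using assms by (simp add: is_walk_def)
  show "{(x # xs) ! i, (x # xs) ! Suc i} \<in> E"
  proof (cases i)
    case 0 then show ?thesis using assms ne by (simp add: hd_conv_nth)
  next
    case (Suc k) then show ?thesis using assms i by (auto simp: is_walk_def)
  qed
qed

lemma walk_take:
  assumes "is_walk V E xs" "0 < k" shows "is_walk V E (take k xs)"
  using assms unfolding is_walk_def
  by (auto dest: in_set_takeD)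

lemma walk_drop:
  assumes "is_walk V E xs" "k < length xs" shows "is_walk V E (drop k xs)"
  using assms unfolding is_walk_def
  by (auto dest: in_set_dropD)

lemma walk_append:
  assumes "is_walk V E xs" "is_walk V E ys" "last xs = hd ys"
  shows "is_walk V E (xs @ tl ys)"
  using assms(2,3)
proof (induction ys rule: rev_induct)
  case Nil then show ?case by (simp add: is_walk_def)
next
  case (snoc y ys)
  show ?case
  proof (cases "ys = []")
    case True then show ?thesis using assms(1) by simp
  next
    case False
    have w: "is_walk V E ys" using snoc.prems(1) False
      using walk_take[OF snoc.prems(1), of "length ys"] by (simp add: is_walk_def)
    have h: "last xs = hd ys" using snoc.prems(2) False by simp
    have IH: "is_walk V E (xs @ tl ys)" using snoc.IH[OF w h] .
    have "tl (ys @ [y]) = tl ys @ [y]" using False by simp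
    moreover have "last (xs @ tl ys) = last ys"
      using False h assms(1) by (cases ys) (auto simp: is_walk_def)
    moreover have "{last ys, y} \<in> E" "y \<in> V"
      using snoc.prems(1) False unfolding is_walk_def
      by (auto simp: last_conv_nth nth_append elim!: allE[where x="length ys - 1"])
    ultimately show ?thesis using walk_snoc[OF IH] by simp
  qed
qed

lemma dist_le:
  assumes "is_walk V E xs" "hd xs = u" "last xs = v"
  shows "graph_dist V E u v \<le> length xs - 1"
proof -
  have ne: "xs \<noteq> []" using assms by (simp add: is_walk_def)
  have "\<exists>ys. is_walk V E ys \<and> hd ys = u \<and> last ys = v \<and> length ys = Suc (length xs - 1)"
    using assms ne by (intro exI[of _ xs]) auto
  then show ?thesis unfolding graph_dist_def by (rule Least_le)
qed

lemma dist_walk: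
  assumes "connected_graph V E" "u \<in> V" "v \<in> V"
  shows "\<exists>xs. is_walk V E xs \<and> hd xs = u \<and> last xs = v \<and> length xs = Suc (graph_dist V E u v)"
proof -
  obtain xs where xs: "is_walk V E xs" "hd xs = u" "last xs = v"
    using assms unfolding connected_graph_def by blast
  then have ne: "xs \<noteq> []" by (simp add: is_walk_def)
  have "\<exists>n ys. is_walk V E ys \<and> hd ys = u \<and> last ys = v \<and> length ys = Suc n"
    using xs ne by (intro exI[of _ "length xs - 1"] exI[of _ xs]) auto
  then show ?thesis unfolding graph_dist_def by (rule LeastI_ex)
qed

lemma dist_sym:
  assumes "connected_graph V E" "u \<in> V" "v \<in> V"
  shows "graph_dist V E u v = graph_dist V E v u"
proof -
  have "graph_dist V E v u \<le> graph_dist V E u v" if uv: "u \<in> V" "v \<in> V" for u v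
  proof -
    obtain xs where xs: "is_walk V E xs" "hd xs = u" "last xs = v" "length xs = Suc (graph_dist V E u v)"
      using dist_walk[OF assms(1) uv] by blast
    then have ne: "xs \<noteq> []" by (simp add: is_walk_def)
    have "graph_dist V E v u \<le> length (rev xs) - 1"
      by (rule dist_le[OF walk_rev[OF xs(1)]]) (use xs ne in \<open>auto simp: hd_rev last_rev\<close>)
    then show ?thesis using xs by simp
  qed
  then show ?thesis using assms by (meson antisym)
qed

lemma dist_tri:
  assumes "connected_graph V E" "u \<in> V" "v \<in> V" "w \<in> V"
  shows "graph_dist V E u w \<le> graph_dist V E u v + graph_dist V E v w"
proof -
  obtain xs where xs: "is_walk V E xs" "hd xs = u" "last xs = v" "length xs = Suc (graph_dist V E u v)"
    using dist_walk[OF assms(1,2,3)] by blast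
  obtain ys where ys: "is_walk V E ys" "hd ys = v" "last ys = w" "length ys = Suc (graph_dist V E v w)"
    using dist_walk[OF assms(1,3,4)] by blast
  have ne: "xs \<noteq> []" "ys \<noteq> []" using xs ys by (auto simp: is_walk_def)
  have "graph_dist V E u w \<le> length (xs @ tl ys) - 1"
  proof (rule dist_le[OF walk_append[OF xs(1) ys(1)]])
    show "last xs = hd ys" using xs ys by simp
    show "hd (xs @ tl ys) = u" using xs ne by simp
    show "last (xs @ tl ys) = w" using xs ys ne by (cases ys) auto
  qed
  then show ?thesis using xs ys ne by simp
qed

lemma dist_edge:
  assumes "connected_graph V E" "u \<in> V" "x \<in> V" "y \<in> V" "{x, y} \<in> E"
  shows "graph_dist V E u y \<le> graph_dist V E u x + 1"
proof -
  obtain xs where xs: "is_walk V E xs" "hd xs = u" "last xs = x" "length xs = Suc (graph_dist V E u x)"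
    using dist_walk[OF assms(1,2,3)] by blast
  have ne: "xs \<noteq> []" using xs by (auto simp: is_walk_def)
  have "graph_dist V E u y \<le> length (xs @ [y]) - 1"
    by (rule dist_le[OF walk_snoc[OF xs(1) assms(4)]]) (use xs ne assms in auto)
  then show ?thesis using xs by simp
qed

lemma dist_0:
  assumes "connected_graph V E" "u \<in> V" "v \<in> V" "graph_dist V E u v = 0"
  shows "u = v"
proof -
  obtain xs where xs: "is_walk V E xs" "hd xs = u" "last xs = v" "length xs = Suc 0"
    using dist_walk[OF assms(1,2,3)] assms(4) by auto
  then show ?thesis by (cases xs) auto
qed

lemma dist_self:
  assumes "u \<in> V" shows "graph_dist V E u u = 0"
proof -
  have "graph_dist V E u u \<le> length [u] - 1"
    by (rule dist_le) (use assms in \<open>auto simp: is_walk_def\<close>)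
  then show ?thesis by simp
qed

lemma edge_in_V: "simple_graph V E \<Longrightarrow> {x, y} \<in> E \<Longrightarrow> x \<in> V \<and> y \<in> V"
  unfolding simple_graph_def by blast

lemma edge_neq: "simple_graph V E \<Longrightarrow> {x, y} \<in> E \<Longrightarrow> x \<noteq> y"
  unfolding simple_graph_def by fastforce

lemma walk1: "x \<in> V \<Longrightarrow> is_walk V E [x]" by (simp add: is_walk_def)

locale rtree =
  fixes V :: "'a set" and E :: "'a set set" and a :: 'a
  assumes tree: "is_tree V E" and aV: "a \<in> V"
begin

lemma sg: "simple_graph V E" and cg: "connected_graph V E" and ac: "acyclic_graph V E"
  using tree by (auto simp: is_tree_def)

lemma finV: "finite V" using sg by (simp add: simple_graph_def)

definition d :: "'a \<Rightarrow> nat" where "d v = graph_dist V E a v"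

lemma d_a: "d a = 0" by (simp add: d_def dist_self[OF aV])

lemma d_0: "v \<in> V \<Longrightarrow> d v = 0 \<Longrightarrow> v = a"
  by (metis d_def dist_0[OF cg aV])

lemma d_edge: "{x, y} \<in> E \<Longrightarrow> d y \<le> d x + 1"
  using dist_edge[OF cg aV] edge_in_V[OF sg] by (simp add: d_def)

lemma parent_ex:
  assumes v: "v \<in> V" "v \<noteq> a"
  shows "\<exists>u\<in>V. {u, v} \<in> E \<and> d u + 1 = d v"
proof -
  obtain xs where xs: "is_walk V E xs" "hd xs = a" "last xs = v" "length xs = Suc (d v)"
    using dist_walk[OF cg aV v(1), folded d_def] by blast
  have k: "d v \<noteq> 0" using d_0 v by auto
  define u where "u = xs ! (d v - 1)"
  have e: "{u, v} \<in> E"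
  proof -
    have "Suc (d v - 1) < length xs" using xs k by simp
    then have "{xs ! (d v - 1), xs ! Suc (d v - 1)} \<in> E" using xs(1) unfolding is_walk_def by blast
    moreover have "xs ! Suc (d v - 1) = v"
    proof -
      have "xs \<noteq> []" using xs by (simp add: is_walk_def)
      then have "xs ! (length xs - 1) = v" using xs(3) by (simp add: last_conv_nth)
      moreover have "length xs - 1 = Suc (d v - 1)" using xs(4) k by simp
      ultimately show ?thesis by simp
    qed
    ultimately show ?thesis by (simp add: u_def)
  qed
  have uV: "u \<in> V" using e edge_in_V[OF sg] by blast
  have "graph_dist V E a u \<le> length (take (d v) xs) - 1"
  proof (rule dist_le[OF walk_take[OF xs(1)]])
    show "0 < d v" using k by simp
    show "hd (take (d v) xs) = a" using xs k by (cases xs) auto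
    have l: "length (take (d v) xs) = d v" using xs by simp
    then have "take (d v) xs \<noteq> []" using k by auto
    then have "last (take (d v) xs) = take (d v) xs ! (d v - 1)" using l by (simp add: last_conv_nth)
    also have "\<dots> = u" using k xs by (simp add: u_def)
    finally show "last (take (d v) xs) = u" .
  qed
  then have "d u \<le> d v - 1" using xs by (simp add: d_def)
  moreover have "d v \<le> d u + 1" using d_edge e by blast
  ultimately show ?thesis using uV e k by (intro bexI[of _ u]) auto
qed

lemma no_cyc_aux:
  "\<forall>p1 p2 Q. d p1 = k \<longrightarrow> d p2 = k \<longrightarrow> p1 \<noteq> p2 \<longrightarrow> is_walk V E Q \<longrightarrow> distinct Q
     \<longrightarrow> hd Q = p1 \<longrightarrow> last Q = p2 \<longrightarrow> (\<forall>z\<in>set Q. k \<le> d z) \<longrightarrow> False"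
proof (induction k)
  case 0
  show ?case
  proof (intro allI impI)
    fix p1 p2 Q
    assume h: "d p1 = 0" "d p2 = 0" "p1 \<noteq> p2" "is_walk V E Q" "hd Q = p1" "last Q = p2"
    have ne: "Q \<noteq> []" using h by (simp add: is_walk_def)
    have "p1 \<in> V" "p2 \<in> V" using h(4,5,6) ne hd_in_set last_in_set unfolding is_walk_def by blast+
    then show False using h d_0 by auto
  qed
next
  case (Suc j)
  show ?case
  proof (intro allI impI)
    fix p1 p2 Q
    assume h: "d p1 = Suc j" "d p2 = Suc j" "p1 \<noteq> p2" "is_walk V E Q" "distinct Q"
      "hd Q = p1" "last Q = p2" "\<forall>z\<in>set Q. Suc j \<le> d z"
    have ne: "Q \<noteq> []" using h by (simp add: is_walk_def)
    have pV: "p1 \<in> V" "p2 \<in> V" using h(4,6,7) ne hd_in_set last_in_set unfolding is_walk_def by blast+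
    have pa: "p1 \<noteq> a" "p2 \<noteq> a" using h d_a by auto
    obtain q1 where q1: "q1 \<in> V" "{q1, p1} \<in> E" "d q1 = j" using parent_ex[OF pV(1) pa(1)] h by auto
    obtain q2 where q2: "q2 \<in> V" "{q2, p2} \<in> E" "d q2 = j" using parent_ex[OF pV(2) pa(2)] h by auto
    have q1n: "q1 \<notin> set Q" "q2 \<notin> set Q" using h(8) q1(3) q2(3) by (metis Suc_n_not_le_n)+
    show False
    proof (cases "q1 = q2")
      case True
      have len: "2 \<le> length Q"
      proof (cases Q)
        case Nil with ne show ?thesis by simp
      next
        case (Cons x t)
        show ?thesis
        proof (cases t)
          case Nil then show ?thesis using Cons h by simp
        next
          case (Cons y s) then show ?thesis using \<open>Q = x # t\<close> by simp
        qed
      qed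
      have "is_cycle V E (q1 # Q)"
        unfolding is_cycle_def
      proof (intro conjI)
        show "3 \<le> length (q1 # Q)" using len by simp
        show "distinct (q1 # Q)" using h q1n by simp
        show "is_walk V E (q1 # Q)" using walk_Cons[OF h(4) q1(1)] q1 h by simp
        show "{last (q1 # Q), hd (q1 # Q)} \<in> E" using q2 True h ne by (simp add: insert_commute)
      qed
      then show False using ac by (auto simp: acyclic_graph_def)
    next
      case False
      have w: "is_walk V E (q1 # Q @ [q2])"
      proof (rule walk_Cons)
        show "is_walk V E (Q @ [q2])" using walk_snoc[OF h(4) q2(1)] q2 h by (simp add: insert_commute)
        show "q1 \<in> V" by fact
        show "{q1, hd (Q @ [q2])} \<in> E" using q1 h ne by simp
      qed
      have "distinct (q1 # Q @ [q2])" using h q1n False by auto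
      moreover have "\<forall>z\<in>set (q1 # Q @ [q2]). j \<le> d z" using h q1 q2 by auto
      ultimately show False
        by (intro Suc.IH[rule_format, of q1 q2 "q1 # Q @ [q2]"]) (use q1 q2 False w in auto)
    qed
  qed
qed

lemma edge_d_neq: assumes e1: "{x, y} \<in> E" shows "d x \<noteq> d y"
proof
  assume e2: "d x = d y"
  note e = e1 e2
  have xy: "x \<noteq> y" using edge_neq[OF sg e(1)] .
  have xyV: "x \<in> V" "y \<in> V" using edge_in_V[OF sg e(1)] by auto
  have w: "is_walk V E [x, y]" using walk_Cons[OF walk1[OF xyV(2)] xyV(1)] e(1) by simp
  have ds: "distinct [x, y]" using xy by simp
  have dz: "\<forall>z\<in>set [x, y]. d x \<le> d z" using e by auto
  show False
    by (rule no_cyc_aux[of "d x", rule_format, of x y "[x, y]"]) (use e xy w ds dz in auto)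
qed

lemma par_unique:
  assumes "{u1, v} \<in> E" "{u2, v} \<in> E" "d u1 + 1 = d v" "d u2 + 1 = d v"
  shows "u1 = u2"
proof (rule ccontr)
  assume ne: "u1 \<noteq> u2"
  have V: "u1 \<in> V" "u2 \<in> V" "v \<in> V" using assms edge_in_V[OF sg] by blast+
  have "is_walk V E [v, u2]" using walk1[OF V(2)] walk_Cons[of V E "[u2]" v] V assms(2) by (simp add: insert_commute)
  then have "is_walk V E [u1, v, u2]" using walk_Cons[of V E "[v, u2]" u1] V assms(1) by simp
  moreover have "distinct [u1, v, u2]" using assms ne by auto
  moreover have "\<forall>z\<in>set [u1, v, u2]. d u1 \<le> d z" using assms by auto
  moreover have "d u1 = d u2" using assms by simp
  ultimately show False
    by (intro no_cyc_aux[of "d u1", rule_format, of u1 u2 "[u1, v, u2]"]) (use ne in auto)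
qed

definition par :: "'a \<Rightarrow> 'a" where
  "par v = (SOME u. u \<in> V \<and> {u, v} \<in> E \<and> d u + 1 = d v)"

lemma par: assumes "v \<in> V" "v \<noteq> a" shows "par v \<in> V \<and> {par v, v} \<in> E \<and> d (par v) + 1 = d v"
proof -
  define P where "P = (\<lambda>u. u \<in> V \<and> {u, v} \<in> E \<and> d u + 1 = d v)"
  have "\<exists>u. P u" using parent_ex[OF assms] unfolding P_def by blast
  then have "P (SOME u. P u)" by (rule someI_ex)
  then show ?thesis unfolding P_def par_def .
qed

end

context rtree
begin

lemma dV: "v \<in> V \<Longrightarrow> v \<noteq> a \<Longrightarrow> d v \<ge> 1"
  using d_0 by fastforce

lemma par_of_edge:
  assumes "{u, v} \<in> E" "d u + 1 = d v"
  shows "par v = u"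
proof -
  have V: "u \<in> V" "v \<in> V" using edge_in_V[OF sg assms(1)] by auto
  have "v \<noteq> a" using assms d_a by auto
  then have p: "par v \<in> V \<and> {par v, v} \<in> E \<and> d (par v) + 1 = d v" using par V by blast
  show ?thesis using par_unique[of "par v" v u] p assms by blast
qed

lemma par_ne: "v \<in> V \<Longrightarrow> v \<noteq> a \<Longrightarrow> par v \<noteq> v"
  using par by fastforce

lemma E_eq: "E = (\<lambda>v. {v, par v}) ` (V - {a})"
proof
  show "(\<lambda>v. {v, par v}) ` (V - {a}) \<subseteq> E"
    using par by (auto simp: insert_commute)
next
  show "E \<subseteq> (\<lambda>v. {v, par v}) ` (V - {a})"
  proof
    fix e assume e: "e \<in> E"
    then have "e \<subseteq> V" "card e = 2" using sg by (auto simp: simple_graph_def)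
    then obtain x y where xy: "e = {x, y}" "x \<noteq> y" by (auto simp: card_2_iff)
    have eE: "{x, y} \<in> E" "{y, x} \<in> E" using e xy by (auto simp: insert_commute)
    have V: "x \<in> V" "y \<in> V" using edge_in_V[OF sg eE(1)] by auto
    have "d x \<noteq> d y" using edge_d_neq eE(1) by blast
    moreover have "d y \<le> d x + 1" "d x \<le> d y + 1" using d_edge eE by blast+
    ultimately have "d x + 1 = d y \<or> d y + 1 = d x" by linarith
    then show "e \<in> (\<lambda>v. {v, par v}) ` (V - {a})"
    proof
      assume h: "d x + 1 = d y"
      then have "par y = x" using par_of_edge eE by blast
      moreover have "y \<noteq> a" using h d_a by auto
      ultimately show ?thesis using xy V by (auto simp: insert_commute intro!: image_eqI[of _ _ y])
    next
      assume h: "d y + 1 = d x"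
      then have "par x = y" using par_of_edge eE by blast
      moreover have "x \<noteq> a" using h d_a by auto
      ultimately show ?thesis using xy V by (auto intro!: image_eqI[of _ _ x])
    qed
  qed
qed

lemma adj_char:
  "{x, c} \<in> E \<longleftrightarrow> (x \<in> V \<and> x \<noteq> a \<and> c = par x) \<or> (c \<in> V \<and> c \<noteq> a \<and> par c = x)"
proof
  assume "{x, c} \<in> E"
  then obtain v where v: "v \<in> V - {a}" "{x, c} = {v, par v}" using E_eq by blast
  then show "(x \<in> V \<and> x \<noteq> a \<and> c = par x) \<or> (c \<in> V \<and> c \<noteq> a \<and> par c = x)"
    by (auto simp: doubleton_eq_iff)
next
  assume "(x \<in> V \<and> x \<noteq> a \<and> c = par x) \<or> (c \<in> V \<and> c \<noteq> a \<and> par c = x)"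
  then show "{x, c} \<in> E"
    using E_eq by (auto simp: insert_commute)
qed

lemma par_inj_edges: "inj_on (\<lambda>v. {v, par v}) (V - {a})"
proof (rule inj_onI)
  fix u v assume uv: "u \<in> V - {a}" "v \<in> V - {a}" "{u, par u} = {v, par v}"
  show "u = v"
  proof (rule ccontr)
    assume "u \<noteq> v"
    then have h: "u = par v" "par u = v" using uv(3) by (auto simp: doubleton_eq_iff)
    have "d (par u) + 1 = d u" "d (par v) + 1 = d v" using par uv(1,2) by blast+
    then show False using h by simp
  qed
qed

lemma card_E: "card E = card V - 1"
  using card_image[OF par_inj_edges] E_eq finV aV by (simp add: card_Diff_singleton)

lemma par_d: "v \<in> V \<Longrightarrow> v \<noteq> a \<Longrightarrow> d (par v) = d v - 1"
  using par by fastforce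

lemma par_V: "v \<in> V \<Longrightarrow> v \<noteq> a \<Longrightarrow> par v \<in> V"
  using par by fastforce

lemma d1_par: assumes "v \<in> V" "d v = 1" shows "par v = a"
proof -
  have "v \<noteq> a" using assms d_a by auto
  then have "par v \<in> V" "d (par v) = 0" using par[OF assms(1)] assms(2) by auto
  then show ?thesis using d_0 by blast
qed

lemma parpow: "v \<in> V \<Longrightarrow> k \<le> d v \<Longrightarrow> (par ^^ k) v \<in> V \<and> d ((par ^^ k) v) = d v - k"
proof (induction k)
  case 0 then show ?case by simp
next
  case (Suc k)
  then have IH: "(par ^^ k) v \<in> V" "d ((par ^^ k) v) = d v - k" by auto
  then have na: "(par ^^ k) v \<noteq> a" using Suc.prems d_a by auto
  show ?case using par[OF IH(1) na] IH by auto
qed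

definition br :: "'a \<Rightarrow> 'a" where "br v = (par ^^ (d v - 1)) v"

lemma br_d: "v \<in> V \<Longrightarrow> v \<noteq> a \<Longrightarrow> br v \<in> V \<and> d (br v) = 1"
  unfolding br_def using parpow[of v "d v - 1"] dV by fastforce

lemma br_par: assumes "v \<in> V" "2 \<le> d v" shows "br (par v) = br v"
proof -
  have na: "v \<noteq> a" using assms d_a by auto
  have "d (par v) = d v - 1" using par_d[OF assms(1) na] .
  then have "br (par v) = (par ^^ (d v - 2)) (par v)" by (simp add: br_def numeral_2_eq_2)
  also have "\<dots> = (par ^^ Suc (d v - 2)) v" by (simp add: funpow_Suc_right del: funpow.simps)
  also have "Suc (d v - 2) = d v - 1" using assms by simp
  finally show ?thesis by (simp add: br_def)
qed

lemma br_edge: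
  assumes "{x, y} \<in> E" "x \<noteq> a" "y \<noteq> a"
  shows "br x = br y"
proof -
  have "(x \<in> V \<and> x \<noteq> a \<and> y = par x) \<or> (y \<in> V \<and> y \<noteq> a \<and> par y = x)"
    using adj_char assms(1) by blast
  then show ?thesis
  proof
    assume h: "x \<in> V \<and> x \<noteq> a \<and> y = par x"
    then have "d y = d x - 1" using par_d by blast
    moreover have "d y \<ge> 1" using dV h assms par_V by blast
    ultimately have "2 \<le> d x" by linarith
    then show ?thesis using br_par h by metis
  next
    assume h: "y \<in> V \<and> y \<noteq> a \<and> par y = x"
    then have "d x = d y - 1" using par_d by blast
    moreover have "d x \<ge> 1" using dV h assms par_V by blast
    ultimately have "2 \<le> d y" by linarith
    then show ?thesis using br_par h by metis
  qed
qed

lemma walk_br: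
  assumes "is_walk V E xs" "a \<notin> set xs"
  shows "br (hd xs) = br (last xs)"
proof -
  have ne: "xs \<noteq> []" using assms by (simp add: is_walk_def)
  have "\<forall>i. i < length xs \<longrightarrow> br (xs ! i) = br (xs ! 0)"
  proof (intro allI)
    fix i show "i < length xs \<longrightarrow> br (xs ! i) = br (xs ! 0)"
    proof (induction i)
      case 0 then show ?case by simp
    next
      case (Suc i)
      show ?case
      proof
        assume i: "Suc i < length xs"
        then have e: "{xs ! i, xs ! Suc i} \<in> E" using assms by (simp add: is_walk_def)
        have "xs ! i \<noteq> a" "xs ! Suc i \<noteq> a" using assms(2) i nth_mem[of i xs] nth_mem[of "Suc i" xs]
          by auto
        then have "br (xs ! Suc i) = br (xs ! i)" using br_edge e by metis
        moreover have "br (xs ! i) = br (xs ! 0)" using Suc.IH i by simp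
        ultimately show "br (xs ! Suc i) = br (xs ! 0)" by simp
      qed
    qed
  qed
  then have "br (xs ! (length xs - 1)) = br (xs ! 0)" using ne by (metis diff_less length_greater_0_conv zero_less_one)
  then show ?thesis using ne by (simp add: hd_conv_nth last_conv_nth)
qed

lemma d_sym: "v \<in> V \<Longrightarrow> graph_dist V E v a = d v"
  using dist_sym[OF cg _ aV] by (simp add: d_def)

lemma dist_lower:
  assumes u: "u \<in> V" "u \<noteq> a" and v: "v \<in> V" "v \<noteq> a" and b: "br u \<noteq> br v"
  shows "d u + d v \<le> graph_dist V E u v"
proof -
  obtain xs where xs: "is_walk V E xs" "hd xs = u" "last xs = v" "length xs = Suc (graph_dist V E u v)"
    using dist_walk[OF cg u(1) v(1)] by blast
  have "a \<in> set xs" using walk_br[OF xs(1)] xs b by auto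
  then obtain i where i: "i < length xs" "xs ! i = a" by (auto simp: in_set_conv_nth)
  have "graph_dist V E u a \<le> length (take (Suc i) xs) - 1"
  proof (rule dist_le[OF walk_take[OF xs(1)]])
    show "0 < Suc i" by simp
    show "hd (take (Suc i) xs) = u" using xs by simp
    show "last (take (Suc i) xs) = a" using i by (simp add: take_Suc_conv_app_nth)
  qed
  then have 1: "d u \<le> i" using d_sym[OF u(1)] i by simp
  have "graph_dist V E a v \<le> length (drop i xs) - 1"
    by (rule dist_le[OF walk_drop[OF xs(1) i(1)]]) (use xs i in \<open>auto simp: hd_drop_conv_nth\<close>)
  then have 2: "d v \<le> length xs - i - 1" by (simp add: d_def)
  show ?thesis using 1 2 xs(4) i by linarith
qed

end

context rtree
begin

lemma struct5:
  assumes P: "is_walk V E P" "length P = 6"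
    and d5: "graph_dist V E (P ! 0) (P ! 5) = 5"
    and maxd: "\<forall>x\<in>V. \<forall>y\<in>V. graph_dist V E x y \<le> 5"
    and a2: "a = P ! 2"
  shows "P ! 3 \<in> V \<and> d (P ! 3) = 1 \<and> par (P ! 3) = a \<and>
         (\<forall>v\<in>V. d v \<le> 3 \<and> (d v = 3 \<longrightarrow> par (par v) = P ! 3))"
proof -
  have wV: "\<And>i. i < 6 \<Longrightarrow> P ! i \<in> V" using P by (auto simp: is_walk_def)
  have we: "\<And>i. i < 5 \<Longrightarrow> {P ! i, P ! Suc i} \<in> E" using P by (auto simp: is_walk_def)
  have e01: "{P!0, P!1} \<in> E" "{P!1, P!0} \<in> E" using we[of 0] by (auto simp: insert_commute)
  have e12: "{P!1, P!2} \<in> E" "{P!2, P!1} \<in> E" using we[of 1] by (auto simp: insert_commute numeral_2_eq_2)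
  have e23: "{P!2, P!3} \<in> E" "{P!3, P!2} \<in> E" using we[of 2] by (auto simp: insert_commute numeral_3_eq_3 numeral_2_eq_2)
  have e34: "{P!3, P!4} \<in> E" "{P!4, P!3} \<in> E" using we[of 3] by (auto simp: insert_commute eval_nat_numeral)
  have e45: "{P!4, P!5} \<in> E" "{P!5, P!4} \<in> E" using we[of 4] by (auto simp: insert_commute eval_nat_numeral)
  have V0: "P!0 \<in> V" and V1: "P!1 \<in> V" and V2: "P!2 \<in> V" and V3: "P!3 \<in> V" and V4: "P!4 \<in> V" and V5: "P!5 \<in> V"
    using wV by auto
  have d2: "d (P!2) = 0" using a2 d_a by simp
  have u1: "d (P!1) \<le> 1" using d_edge[OF e12(2)] d2 by simp
  have u0: "d (P!0) \<le> 2" using d_edge[OF e01(2)] u1 by simp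
  have u3: "d (P!3) \<le> 1" using d_edge[OF e23(1)] d2 by simp
  have u4: "d (P!4) \<le> 2" using d_edge[OF e34(1)] u3 by simp
  have u5: "d (P!5) \<le> 3" using d_edge[OF e45(1)] u4 by simp
  have "5 \<le> graph_dist V E (P!0) (P!2) + graph_dist V E (P!2) (P!5)"
    using dist_tri[OF cg V0 V2 V5] d5 by simp
  moreover have "graph_dist V E (P!0) (P!2) = d (P!0)" using d_sym[OF V0] a2 by simp
  moreover have "graph_dist V E (P!2) (P!5) = d (P!5)" unfolding d_def using a2 by simp
  ultimately have "5 \<le> d (P!0) + d (P!5)" by simp
  then have D0: "d (P!0) = 2" and D5: "d (P!5) = 3" using u0 u5 by auto
  have D1: "d (P!1) = 1" using d_edge[OF e01(2)] D0 u1 by simp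
  have D4: "d (P!4) = 2" using d_edge[OF e45(1)] D5 u4 by simp
  have D3: "d (P!3) = 1" using d_edge[OF e34(1)] D4 u3 by simp
  have p0: "par (P!0) = P!1" using par_of_edge[OF e01(2)] D0 D1 by simp
  have p5: "par (P!5) = P!4" using par_of_edge[OF e45(1)] D5 D4 by simp
  have p4: "par (P!4) = P!3" using par_of_edge[OF e34(1)] D4 D3 by simp
  have p3: "par (P!3) = a" using par_of_edge[OF e23(1)] D3 d2 a2 by simp
  have b0: "br (P!0) = P!1" using p0 D0 by (simp add: br_def)
  have b5: "br (P!5) = P!3" using p5 p4 D5 by (simp add: br_def eval_nat_numeral)
  have n13: "P!1 \<noteq> P!3"
  proof
    assume eq: "P!1 = P!3"
    have "graph_dist V E (P!0) (P!1) \<le> 1"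
      using dist_edge[OF cg V0 V0 V1 e01(1)] dist_self[OF V0] by simp
    moreover have "graph_dist V E (P!3) (P!5) \<le> 2"
      using dist_edge[OF cg V3 V3 V4 e34(1)] dist_edge[OF cg V3 V4 V5 e45(1)] dist_self[OF V3] by simp
    moreover have "graph_dist V E (P!0) (P!5) \<le> graph_dist V E (P!0) (P!1) + graph_dist V E (P!1) (P!5)"
      using dist_tri[OF cg V0 V1 V5] .
    ultimately show False using eq d5 by simp
  qed
  have na0: "P!0 \<noteq> a" and na5: "P!5 \<noteq> a" using D0 D5 d_a by auto
  have main: "d v \<le> 3 \<and> (d v = 3 \<longrightarrow> par (par v) = P ! 3)" if v: "v \<in> V" for v
  proof (cases "v = a")
    case True then show ?thesis using d_a by simp
  next
    case False
    have A: "d v \<le> 3"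
    proof (cases "br v = br (P!0)")
      case True
      then have "br v \<noteq> br (P!5)" using b0 b5 n13 by simp
      then have "d v + d (P!5) \<le> graph_dist V E v (P!5)" using dist_lower[OF v False V5 na5] by simp
      then show ?thesis using maxd v V5 D5 by fastforce
    next
      case nb: False
      then have "d v + d (P!0) \<le> graph_dist V E v (P!0)" using dist_lower[OF v False V0 na0] by simp
      then show ?thesis using maxd v V0 D0 by fastforce
    qed
    have B: "par (par v) = P ! 3" if d3: "d v = 3"
    proof -
      have "br v = br (P!5)"
      proof (rule ccontr)
        assume "br v \<noteq> br (P!5)"
        then have "d v + d (P!5) \<le> graph_dist V E v (P!5)" using dist_lower[OF v False V5 na5] by simp
        then show False using maxd v V5 D5 d3 by fastforce
      qed
      then show ?thesis using b5 d3 by (simp add: br_def eval_nat_numeral)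
    qed
    show ?thesis using A B by blast
  qed
  show ?thesis using main V3 D3 p3 by blast
qed

end

lemma rank_le:
  fixes key :: "'a \<Rightarrow> 'b::linorder"
  assumes "finite V" "key u \<le> key v"
  shows "card {w\<in>V. key w < key u} \<le> card {w\<in>V. key w < key v}"
  using assms by (intro card_mono) auto

lemma rank_less:
  fixes key :: "'a \<Rightarrow> 'b::linorder"
  assumes "finite V" "u \<in> V" "key u < key v"
  shows "card {w\<in>V. key w < key u} < card {w\<in>V. key w < key v}"
  using assms by (intro psubset_card_mono) auto

lemma rank_bound:
  fixes key :: "'a \<Rightarrow> 'b::linorder"
  assumes "finite V" "v \<in> V"
  shows "card {w\<in>V. key w < key v} < card V"
  using assms by (intro psubset_card_mono) auto

locale comb =
  fixes V :: "'a set" and a b :: 'a and par :: "'a \<Rightarrow> 'a" and d :: "'a \<Rightarrow> nat"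
    and g :: "'a \<Rightarrow> nat"
  assumes fin: "finite V" and aV: "a \<in> V" and bV: "b \<in> V" and da: "d a = 0" and db: "d b = 1"
    and pb: "par b = a"
    and parV: "\<And>v. v \<in> V \<Longrightarrow> v \<noteq> a \<Longrightarrow> par v \<in> V \<and> d (par v) + 1 = d v"
    and d3: "\<And>v. v \<in> V \<Longrightarrow> d v \<le> 3"
    and d3b: "\<And>v. v \<in> V \<Longrightarrow> d v = 3 \<Longrightarrow> par (par v) = b"
    and ginj: "inj_on g V"
begin

lemma d0: "v \<in> V \<Longrightarrow> d v = 0 \<Longrightarrow> v = a"
  using parV by fastforce

lemma ba: "b \<noteq> a" using da db by auto

lemma dpos: "v \<in> V \<Longrightarrow> v \<noteq> a \<Longrightarrow> 1 \<le> d v"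
  using d0 by fastforce

lemma pV: "v \<in> V \<Longrightarrow> v \<noteq> a \<Longrightarrow> par v \<in> V" using parV by blast
lemma pd: "v \<in> V \<Longrightarrow> v \<noteq> a \<Longrightarrow> d (par v) = d v - 1" using parV by fastforce

lemma p1: "v \<in> V \<Longrightarrow> d v = 1 \<Longrightarrow> par v = a"
  using d0 pV pd da by (metis diff_self_eq_0 zero_neq_one)

definition hk where "hk x \<longleftrightarrow> (\<exists>c\<in>V-{a}. par c = x)"
definition D1 where "D1 = {v\<in>V. d v = 1}"
definition D2 where "D2 = {v\<in>V. d v = 2}"
definition D3 where "D3 = {v\<in>V. d v = 3}"
definition Pe where "Pe = {x\<in>V. d x = 1 \<and> x \<noteq> b \<and> \<not> hk x}"
definition NP where "NP = {x\<in>V. d x = 1 \<and> x \<noteq> b \<and> hk x}"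
definition Q0 where "Q0 = {y\<in>V. d y = 2 \<and> par y = b \<and> hk y}"

lemma NP_eq: "{x \<in> V - {a}. par x = a \<and> x \<noteq> b \<and> (\<exists>c\<in>V-{a}. par c = x)} = NP"
proof -
  have "x \<in> V - {a} \<and> par x = a \<longleftrightarrow> x \<in> V \<and> d x = 1" for x
    using parV[of x] da p1[of x] by (auto simp: ba)
  then show ?thesis unfolding NP_def hk_def by blast
qed

lemma Q0_eq: "{x \<in> V - {a}. par x = b \<and> x \<noteq> a \<and> (\<exists>c\<in>V-{a}. par c = x)} = Q0"
proof -
  have "x \<in> V - {a} \<and> par x = b \<longleftrightarrow> x \<in> V \<and> d x = 2 \<and> par x = b" for x
    using parV[of x] db da by auto
  then show ?thesis unfolding Q0_def hk_def by blast
qed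

lemma fins: "finite D1" "finite D2" "finite D3" "finite Pe" "finite NP" "finite Q0"
  using fin by (auto simp: D1_def D2_def D3_def Pe_def NP_def Q0_def)

lemma dcases: assumes "v \<in> V" shows "v = a \<or> v \<in> D1 \<or> v \<in> D2 \<or> v \<in> D3"
proof -
  have "d v = 0 \<or> d v = 1 \<or> d v = 2 \<or> d v = 3" using d3[OF assms] by arith
  then show ?thesis using d0[OF assms] assms by (auto simp: D1_def D2_def D3_def)
qed

lemma cardV: "card V = 1 + card D1 + card D2 + card D3"
proof -
  have eq: "V = insert a (D1 \<union> D2 \<union> D3)" using dcases aV by (auto simp: D1_def D2_def D3_def)
  have na: "a \<notin> D1 \<union> D2 \<union> D3" using da by (auto simp: D1_def D2_def D3_def)
  have dj: "D1 \<inter> D2 = {}" "(D1 \<union> D2) \<inter> D3 = {}" by (auto simp: D1_def D2_def D3_def)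
  have "card (insert a (D1 \<union> D2 \<union> D3)) = Suc (card (D1 \<union> D2 \<union> D3))"
    using na fins by (intro card_insert_disjoint) auto
  also have "card (D1 \<union> D2 \<union> D3) = card (D1 \<union> D2) + card D3"
    using dj fins by (intro card_Un_disjoint) auto
  also have "card (D1 \<union> D2) = card D1 + card D2"
    using dj fins by (intro card_Un_disjoint) auto
  finally show ?thesis using eq by simp
qed

lemma cardD1: "card D1 = 1 + card Pe + card NP"
proof -
  have eq: "D1 = insert b (Pe \<union> NP)" using bV db by (auto simp: D1_def Pe_def NP_def)
  have nb: "b \<notin> Pe \<union> NP" by (auto simp: Pe_def NP_def)
  have dj: "Pe \<inter> NP = {}" by (auto simp: Pe_def NP_def)
  have "card (insert b (Pe \<union> NP)) = Suc (card (Pe \<union> NP))"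
    using nb fins by (intro card_insert_disjoint) auto
  also have "card (Pe \<union> NP) = card Pe + card NP"
    using dj fins by (intro card_Un_disjoint) auto
  finally show ?thesis using eq by simp
qed

lemma NP_D2: "card NP \<le> card D2"
proof -
  have "NP \<subseteq> par ` D2"
  proof
    fix x assume "x \<in> NP"
    then obtain c where c: "c \<in> V" "c \<noteq> a" "par c = x" "d x = 1" by (auto simp: NP_def hk_def)
    then have "d c = 2" using parV[of c] by auto
    then show "x \<in> par ` D2" using c by (auto simp: D2_def)
  qed
  then show ?thesis using fins by (meson card_image_le card_mono dual_order.trans finite_imageI)
qed

definition c1 where "c1 x = (if x = b then 1 else if hk x then 2 else (0::nat))"
definition ch where "ch y = (if hk y then 0 else (1::nat))"
definition key :: "'a \<Rightarrow> nat \<times> nat \<times> nat \<times> nat \<times> nat" where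
  "key v = (if d v = 0 then (0,0,0,0,0) else if d v = 1 then (1, c1 v, g v, 0, 0)
     else if d v = 2 then (2, c1 (par v), g (par v), ch v, g v) else (3, 0, g (par v), g v, 0))"
definition r where "r v = card {u\<in>V. key u < key v}"

lemma fst_key: "v \<in> V \<Longrightarrow> fst (key v) = d v"
  using d3[of v] by (auto simp: key_def)

lemma key_less_d: "u \<in> V \<Longrightarrow> v \<in> V \<Longrightarrow> key u < key v \<Longrightarrow> d u \<le> d v"
  using fst_key by (metis less_prod_def less_imp_le order_refl)

lemma key_inj: "inj_on key V"
proof (rule inj_onI)
  fix u v assume uv: "u \<in> V" "v \<in> V" "key u = key v"
  then have dd: "d u = d v" using fst_key by metis
  consider "d u = 0" | "d u = 1" | "d u = 2" | "d u = 3" using d3[OF uv(1)] by linarith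
  then show "u = v"
  proof cases
    case 1 then show ?thesis using dd d0 uv by auto
  next
    case 2 then show ?thesis using dd uv ginj by (auto simp: key_def inj_on_def)
  next
    case 3 then show ?thesis using dd uv ginj by (auto simp: key_def inj_on_def)
  next
    case 4 then show ?thesis using dd uv ginj by (auto simp: key_def inj_on_def)
  qed
qed

lemma r_le: "key u \<le> key v \<Longrightarrow> r u \<le> r v"
  unfolding r_def using rank_le[OF fin] by blast

lemma r_less: "u \<in> V \<Longrightarrow> key u < key v \<Longrightarrow> r u < r v"
  unfolding r_def using rank_less[OF fin] by blast

lemma r_bound: "v \<in> V \<Longrightarrow> r v < card V"
  unfolding r_def using rank_bound[OF fin] by blast

lemma r_less_key: "u \<in> V \<Longrightarrow> v \<in> V \<Longrightarrow> r u < r v \<Longrightarrow> key u < key v"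
  using r_le by (meson leD le_less_linear)

lemma r_inj: "inj_on r V"
proof (rule inj_onI)
  fix u v assume uv: "u \<in> V" "v \<in> V" "r u = r v"
  show "u = v"
  proof (rule ccontr)
    assume "u \<noteq> v"
    then have "key u \<noteq> key v" using key_inj uv by (meson inj_on_def)
    then have "key u < key v \<or> key v < key u" by auto
    then show False using r_less uv by fastforce
  qed
qed

end

context comb
begin

lemma key_a: "key a = (0,0,0,0,0)" using da by (simp add: key_def)
lemma key_D1: "v \<in> D1 \<Longrightarrow> key v = (1, c1 v, g v, 0, 0)" by (simp add: key_def D1_def)
lemma key_D2: "v \<in> D2 \<Longrightarrow> key v = (2, c1 (par v), g (par v), ch v, g v)" by (simp add: key_def D2_def)
lemma key_D3: "v \<in> D3 \<Longrightarrow> key v = (3, 0, g (par v), g v, 0)" by (simp add: key_def D3_def)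

lemma c1_b: "c1 b = 1" by (simp add: c1_def)
lemma c1_1: "c1 x = 1 \<Longrightarrow> x = b" by (simp add: c1_def split: if_splits)

lemma child_hk: "v \<in> V \<Longrightarrow> v \<noteq> a \<Longrightarrow> hk (par v)"
  unfolding hk_def by blast

lemma R1: assumes v: "v \<in> D1" shows "1 \<le> r v \<and> r v \<le> card D1"
proof -
  have vV: "v \<in> V" using v by (simp add: D1_def)
  have sub: "{u\<in>V. key u < key v} \<subseteq> insert a (D1 - {v})"
  proof
    fix u assume u: "u \<in> {u\<in>V. key u < key v}"
    then have "d u \<le> 1" using key_less_d[OF _ vV] v by (auto simp: D1_def)
    moreover have "u \<noteq> v" using u by auto
    ultimately show "u \<in> insert a (D1 - {v})" using u d0 by (cases "d u = 0") (auto simp: D1_def)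
  qed
  have aIn: "a \<in> {u\<in>V. key u < key v}" using aV key_a key_D1[OF v] by simp
  have "1 \<le> r v" unfolding r_def using aIn fin
    by (metis (no_types, lifting) One_nat_def Suc_leI card_gt_0_iff empty_iff finite_subset mem_Collect_eq subsetI)
  moreover have "r v \<le> card (insert a (D1 - {v}))" unfolding r_def
    using sub fins by (intro card_mono) auto
  moreover have "card (insert a (D1 - {v})) \<le> card D1"
    using fins v card_insert_le_m1 by (metis One_nat_def card_Diff_singleton card_gt_0_iff
        card_insert_if diff_Suc_1 emptyE finite_Diff le_refl Suc_pred)
  ultimately show ?thesis by linarith
qed

lemma R2: assumes v: "v \<in> V" "2 \<le> d v" shows "card D1 + 1 \<le> r v"
proof -
  have sub: "insert a D1 \<subseteq> {u\<in>V. key u < key v}"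
  proof
    fix u assume u: "u \<in> insert a D1"
    have "fst (key u) < fst (key v)" using u v fst_key aV da by (auto simp: D1_def)
    then show "u \<in> {u\<in>V. key u < key v}" using u aV by (auto simp: D1_def less_prod_def)
  qed
  have "a \<notin> D1" using da by (simp add: D1_def)
  then have "card (insert a D1) = card D1 + 1" using fins by simp
  moreover have "card (insert a D1) \<le> r v" unfolding r_def using sub fin by (intro card_mono) auto
  ultimately show ?thesis by simp
qed

lemma R3: assumes v: "v \<in> D2" shows "r v \<le> card D1 + card D2"
proof -
  have vV: "v \<in> V" using v by (simp add: D2_def)
  have sub: "{u\<in>V. key u < key v} \<subseteq> insert a D1 \<union> (D2 - {v})"
  proof
    fix u assume u: "u \<in> {u\<in>V. key u < key v}"
    then have "d u \<le> 2" using key_less_d[OF _ vV] v by (auto simp: D2_def)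
    moreover have "u \<noteq> v" using u by auto
    ultimately show "u \<in> insert a D1 \<union> (D2 - {v})" using u d0
      by (cases "d u = 0"; cases "d u = 1") (auto simp: D1_def D2_def)
  qed
  have "r v \<le> card (insert a D1 \<union> (D2 - {v}))" unfolding r_def
    using sub fins by (intro card_mono) auto
  also have "\<dots> \<le> card (insert a D1) + card (D2 - {v})" by (rule card_Un_le)
  finally have 1: "r v \<le> card (insert a D1) + card (D2 - {v})" .
  have "a \<notin> D1" using da by (simp add: D1_def)
  then have 2: "card (insert a D1) = card D1 + 1" using fins by simp
  have 3: "card (D2 - {v}) = card D2 - 1" using v fins by (simp add: card_Diff_singleton)
  have 4: "card D2 \<ge> 1" using v fins by (metis One_nat_def Suc_leI card_gt_0_iff empty_iff)
  show ?thesis using 1 2 3 4 by linarith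
qed

lemma R4: assumes v: "v \<in> D3" shows "card D1 + card D2 + 1 \<le> r v"
proof -
  have vV: "v \<in> V" using v by (simp add: D3_def)
  have sub: "insert a (D1 \<union> D2) \<subseteq> {u\<in>V. key u < key v}"
  proof
    fix u assume u: "u \<in> insert a (D1 \<union> D2)"
    have "fst (key u) < fst (key v)" using u v vV fst_key aV da by (auto simp: D1_def D2_def D3_def)
    then show "u \<in> {u\<in>V. key u < key v}" using u aV by (auto simp: D1_def D2_def less_prod_def)
  qed
  have "a \<notin> D1 \<union> D2" using da by (auto simp: D1_def D2_def)
  moreover have "D1 \<inter> D2 = {}" by (auto simp: D1_def D2_def)
  ultimately have "card (insert a (D1 \<union> D2)) = card D1 + card D2 + 1" using fins
    by (simp add: card_Un_disjoint)
  moreover have "card (insert a (D1 \<union> D2)) \<le> r v" unfolding r_def using sub fin by (intro card_mono) auto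
  ultimately show ?thesis by simp
qed

lemma R5: "r b = 1 + card Pe"
proof -
  have bD1: "b \<in> D1" using bV db by (simp add: D1_def)
  have eq: "{u\<in>V. key u < key b} = insert a Pe"
  proof
    show "{u\<in>V. key u < key b} \<subseteq> insert a Pe"
    proof
      fix u assume u: "u \<in> {u\<in>V. key u < key b}"
      then have uV: "u \<in> V" and lt: "key u < key b" by auto
      have "d u \<le> 1" using key_less_d[OF uV bV lt] db by simp
      show "u \<in> insert a Pe"
      proof (cases "d u = 0")
        case True then show ?thesis using d0 uV by auto
      next
        case False
        then have du: "d u = 1" using \<open>d u \<le> 1\<close> by simp
        then have uD: "u \<in> D1" using uV by (simp add: D1_def)
        have "(1::nat, c1 u, g u, 0::nat, 0::nat) < (1, c1 b, g b, 0, 0)"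
          using lt key_D1[OF uD] key_D1[OF bD1] by simp
        then have h: "c1 u < 1 \<or> (c1 u \<le> 1 \<and> g u < g b)" using c1_b by simp
        have "c1 u = 0"
        proof (rule ccontr)
          assume "c1 u \<noteq> 0"
          then have "c1 u = 1" using h by linarith
          then have "u = b" by (rule c1_1)
          then show False using h c1_b by simp
        qed
        then show ?thesis using uV du by (auto simp: Pe_def c1_def split: if_splits)
      qed
    qed
  next
    show "insert a Pe \<subseteq> {u\<in>V. key u < key b}"
    proof
      fix u assume u: "u \<in> insert a Pe"
      show "u \<in> {u\<in>V. key u < key b}"
      proof (cases "u = a")
        case True then show ?thesis using aV key_a key_D1[OF bD1] by simp
      next
        case False
        then have uP: "u \<in> Pe" using u by simp
        then have "u \<in> D1" "c1 u = 0" by (auto simp: Pe_def D1_def c1_def)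
        then show ?thesis using key_D1 bD1 c1_b uP by (auto simp: Pe_def less_prod_def)
      qed
    qed
  qed
  have "a \<notin> Pe" using da by (simp add: Pe_def)
  then show ?thesis unfolding r_def eq using fins by simp
qed

lemma R6: assumes y: "y \<in> Q0" shows "r y \<le> card D1 + card Q0"
proof -
  have yV: "y \<in> V" and dy: "d y = 2" and py: "par y = b" and hy: "hk y" using y by (auto simp: Q0_def)
  have yD2: "y \<in> D2" using yV dy by (simp add: D2_def)
  have ky: "key y = (2, 1, g b, 0, g y)" using key_D2[OF yD2] py c1_b hy by (simp add: ch_def)
  have sub: "{u\<in>V. key u < key y} \<subseteq> insert a D1 \<union> (Q0 - {y})"
  proof
    fix u assume u: "u \<in> {u\<in>V. key u < key y}"
    then have uV: "u \<in> V" and lt: "key u < key y" by auto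
    have "d u \<le> 2" using key_less_d[OF uV yV lt] dy by simp
    show "u \<in> insert a D1 \<union> (Q0 - {y})"
    proof (cases "d u = 2")
      case False then show ?thesis using \<open>d u \<le> 2\<close> uV d0
        by (cases "d u = 0") (auto simp: D1_def)
    next
      case True
      then have uD: "u \<in> D2" using uV by (simp add: D2_def)
      have ua: "u \<noteq> a" using True da by auto
      have hp: "hk (par u)" using child_hk[OF uV ua] .
      then have c1p: "c1 (par u) \<noteq> 0" by (simp add: c1_def)
      have "(2::nat, c1 (par u), g (par u), ch u, g u) < (2, 1, g b, 0, g y)"
        using lt key_D2[OF uD] ky by simp
      then have h: "c1 (par u) < 1 \<or> c1 (par u) \<le> 1 \<and> (g (par u) < g b \<or> g (par u) \<le> g b \<and> (ch u < 0 \<or> ch u \<le> 0 \<and> g u < g y))"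
        by simp
      then have c0: "c1 (par u) = 1" using c1p by linarith
      then have "par u = b" by (rule c1_1)
      then have c: "c1 (par u) = 1" "ch u = 0" "g u < g y" using h c0 by auto
      have "par u = b" using c1_1 c(1) .
      moreover have "hk u" using c(2) by (simp add: ch_def split: if_splits)
      moreover have "u \<noteq> y" using c(3) by auto
      ultimately show ?thesis using uV True by (auto simp: Q0_def)
    qed
  qed
  have "r y \<le> card (insert a D1 \<union> (Q0 - {y}))" unfolding r_def
    using sub fins by (intro card_mono) auto
  also have "\<dots> \<le> card (insert a D1) + card (Q0 - {y})" by (rule card_Un_le)
  finally have 1: "r y \<le> card (insert a D1) + card (Q0 - {y})" .
  have "a \<notin> D1" using da by (simp add: D1_def)
  then have 2: "card (insert a D1) = card D1 + 1" using fins by simp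
  have 3: "card (Q0 - {y}) = card Q0 - 1" using y fins by (simp add: card_Diff_singleton)
  have 4: "card Q0 \<ge> 1" using y fins by (metis One_nat_def Suc_leI card_gt_0_iff empty_iff)
  show ?thesis using 1 2 3 4 by linarith
qed

lemma M1: assumes u: "u \<in> D2" and v: "v \<in> D2" and lt: "r u < r v"
  shows "r (par u) \<le> r (par v)"
proof -
  have uV: "u \<in> V" "v \<in> V" using u v by (auto simp: D2_def)
  have "key u < key v" using r_less_key uV lt by blast
  then have "(2::nat, c1 (par u), g (par u), ch u, g u) < (2, c1 (par v), g (par v), ch v, g v)"
    using key_D2 u v by simp
  then have h: "c1 (par u) < c1 (par v) \<or> (c1 (par u) = c1 (par v) \<and> g (par u) \<le> g (par v))"
    by (auto simp: less_prod_def)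
  have ua: "u \<noteq> a" "v \<noteq> a" using u v da by (auto simp: D2_def)
  have "par u \<in> D1" "par v \<in> D1" using parV[of u] parV[of v] uV ua u v by (auto simp: D1_def D2_def)
  then have "key (par u) \<le> key (par v)" using h key_D1 by (auto simp: less_eq_prod_def less_prod_def)
  then show ?thesis by (rule r_le)
qed

lemma D3_par: assumes v: "v \<in> D3" shows "par v \<in> Q0"
proof -
  have vV: "v \<in> V" and dv: "d v = 3" using v by (auto simp: D3_def)
  have va: "v \<noteq> a" using dv da by auto
  have "par v \<in> V" "d (par v) = 2" using parV[OF vV va] dv by auto
  moreover have "par (par v) = b" using d3b vV dv by blast
  moreover have "hk (par v)" using child_hk vV va by blast
  ultimately show ?thesis by (simp add: Q0_def)
qed

lemma Q0_D2: "y \<in> Q0 \<Longrightarrow> y \<in> D2" by (simp add: Q0_def D2_def)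

lemma M2: assumes u: "u \<in> D3" and v: "v \<in> D3" and lt: "r u < r v"
  shows "r (par u) \<le> r (par v)"
proof -
  have uV: "u \<in> V" "v \<in> V" using u v by (auto simp: D3_def)
  have "key u < key v" using r_less_key uV lt by blast
  then have "(3::nat, 0::nat, g (par u), g u, 0::nat) < (3, 0, g (par v), g v, 0)"
    using key_D3 u v by simp
  then have h: "g (par u) \<le> g (par v)" by (auto simp: less_prod_def)
  have q: "par u \<in> Q0" "par v \<in> Q0" using D3_par u v by auto
  have "key (par u) = (2, 1, g b, 0, g (par u))" "key (par v) = (2, 1, g b, 0, g (par v))"
    using q key_D2[OF Q0_D2] c1_b by (auto simp: Q0_def ch_def)
  then have "key (par u) \<le> key (par v)" using h by (auto simp: less_eq_prod_def less_prod_def)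
  then show ?thesis by (rule r_le)
qed

end

locale comb2 = comb +
  assumes cnt: "card Q0 \<le> card NP + 1"
begin

definition n where "n = card V - 1"

lemma cardV_n: "card V = n + 1"
proof -
  have "card V \<noteq> 0" using aV fin by auto
  then show ?thesis unfolding n_def by simp
qed

lemma n_eq: "n = card D1 + card D2 + card D3"
  unfolding n_def using cardV by simp

definition om :: "'a \<Rightarrow> int" where
  "om v = (if d v = 1 then 2 * int n + 1 - 2 * int (r v) else 2 * int (r v) - 2 * int (card D1) - 1)"

definition lab :: "'a \<Rightarrow> int" where
  "lab v = (if d v = 0 then 0 else if d v = 1 then om v else if d v = 2 then om (par v) - om v
            else om (par (par v)) - om (par v) - om v)"

lemma r_le_n: "v \<in> V \<Longrightarrow> r v \<le> n"
  using r_bound cardV_n by fastforce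

lemma O1: assumes "v \<in> D1" shows "2 * int n + 1 - 2 * int (card D1) \<le> om v \<and> om v \<le> 2 * int n - 1"
  using R1[OF assms] assms by (auto simp: om_def D1_def)

lemma O2: assumes "v \<in> V" "2 \<le> d v" shows "1 \<le> om v \<and> om v \<le> 2 * int n - 2 * int (card D1) - 1"
  using R2[OF assms] r_le_n[OF assms(1)] assms(2) by (auto simp: om_def)

lemma O3: assumes "v \<in> D2" shows "om v \<le> 2 * int (card D2) - 1"
  using R3[OF assms] assms by (auto simp: om_def D2_def)

lemma O4: assumes "v \<in> D3" shows "2 * int (card D2) + 1 \<le> om v"
  using R4[OF assms] assms by (auto simp: om_def D3_def)

lemma O5: "om b = 2 * int n - 1 - 2 * int (card Pe)"
  using R5 db by (simp add: om_def)

lemma O6: assumes "y \<in> Q0" shows "om y \<le> 2 * int (card Q0) - 1"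
  using R6[OF assms] assms by (auto simp: om_def Q0_def)

lemma om_odd: "odd (om v)"
proof (cases "d v = 1")
  case True
  then have "om v = 2 * (int n - int (r v)) + 1" by (simp add: om_def algebra_simps)
  then show ?thesis by simp
next
  case False
  then have "om v = 2 * (int (r v) - int (card D1) - 1) + 1" by (simp add: om_def algebra_simps)
  then show ?thesis by simp
qed

lemma D1_V: "v \<in> D1 \<Longrightarrow> v \<in> V \<and> d v = 1" by (simp add: D1_def)
lemma D2_V: "v \<in> D2 \<Longrightarrow> v \<in> V \<and> d v = 2" by (simp add: D2_def)
lemma D3_V: "v \<in> D3 \<Longrightarrow> v \<in> V \<and> d v = 3" by (simp add: D3_def)

lemma D2_par: assumes "v \<in> D2" shows "par v \<in> D1"
proof -
  have v: "v \<in> V" "d v = 2" using assms by (auto simp: D2_def)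
  then have "v \<noteq> a" using da by auto
  then have "par v \<in> V" "d (par v) + 1 = d v" using parV[OF v(1)] by auto
  then show ?thesis using v by (simp add: D1_def)
qed

lemma lab1: "v \<in> D1 \<Longrightarrow> lab v = om v" by (simp add: lab_def D1_def)

lemma lab1b: assumes "v \<in> D1"
  shows "2 * int n + 1 - 2 * int (card D1) \<le> lab v \<and> lab v \<le> 2 * int n - 1 \<and> odd (lab v)"
  using O1[OF assms] lab1[OF assms] om_odd by simp

lemma lab2: "v \<in> D2 \<Longrightarrow> lab v = om (par v) - om v" by (simp add: lab_def D2_def)

lemma lab2b: assumes v: "v \<in> D2"
  shows "2 \<le> lab v \<and> lab v \<le> 2 * int n - 2 \<and> even (lab v)"
proof -
  have p: "par v \<in> D1" using D2_par[OF v] .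
  have 1: "2 * int n + 1 - 2 * int (card D1) \<le> om (par v) \<and> om (par v) \<le> 2 * int n - 1" using O1[OF p] .
  have 2: "om v \<le> 2 * int (card D2) - 1" using O3[OF v] .
  have 3: "1 \<le> om v" using O2[of v] v by (auto simp: D2_def)
  have "even (om (par v) - om v)" using om_odd[of "par v"] om_odd[of v] by simp
  then show ?thesis using 1 2 3 n_eq lab2[OF v] by simp
qed

lemma lab3: "v \<in> D3 \<Longrightarrow> lab v = om b - om (par v) - om v"
  using d3b by (simp add: lab_def D3_def)

lemma lab3b: assumes v: "v \<in> D3"
  shows "1 \<le> lab v \<and> lab v \<le> 2 * int n - 1 - 2 * int (card D1) \<and> odd (lab v)"
proof -
  have q: "par v \<in> Q0" using D3_par[OF v] .
  have 1: "om (par v) \<le> 2 * int (card Q0) - 1" using O6[OF q] .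
  have 2: "1 \<le> om (par v)" using O2[of "par v"] q by (auto simp: Q0_def)
  have 3: "2 * int (card D2) + 1 \<le> om v" using O4[OF v] .
  have 4: "om v \<le> 2 * int n - 2 * int (card D1) - 1" using O2[of v] v by (auto simp: D3_def)
  have "odd (om b - om (par v) - om v)" using om_odd[of b] om_odd[of "par v"] om_odd[of v] by simp
  then show ?thesis using 1 2 3 4 O5 lab3[OF v] cardD1 cnt NP_D2 by simp
qed

lemma lab_a: "lab a = 0" using da by (simp add: lab_def)

lemma lab_pos: assumes "v \<in> V" "v \<noteq> a" shows "1 \<le> lab v"
proof -
  have "v \<in> D1 \<or> v \<in> D2 \<or> v \<in> D3" using dcases[OF assms(1)] assms(2) by blast
  then show ?thesis
  proof (elim disjE)
    assume "v \<in> D1" then show ?thesis using lab1b[of v] n_eq by linarith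
  next
    assume "v \<in> D2" then show ?thesis using lab2b[of v] by linarith
  next
    assume "v \<in> D3" then show ?thesis using lab3b[of v] by linarith
  qed
qed

lemma lab_le: assumes "v \<in> V" shows "lab v \<le> 2 * int n - 1"
proof -
  have "v = a \<or> v \<in> D1 \<or> v \<in> D2 \<or> v \<in> D3" using dcases[OF assms(1)] by blast
  then show ?thesis
  proof (elim disjE)
    assume "v = a" then show ?thesis using lab_a lab_pos[OF bV ba] lab1b[of b] bV db n_eq
      by (simp add: D1_def)
  next
    assume "v \<in> D1" then show ?thesis using lab1b[of v] by linarith
  next
    assume "v \<in> D2" then show ?thesis using lab2b[of v] by linarith
  next
    assume "v \<in> D3" then show ?thesis using lab3b[of v] n_eq by linarith
  qed
qed

lemma lab_nonneg: "v \<in> V \<Longrightarrow> 0 \<le> lab v"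
  using lab_pos lab_a by (cases "v = a") fastforce+

lemma eo: "even (x::int) \<Longrightarrow> odd y \<Longrightarrow> x \<noteq> y" by auto

lemma lab_inj_aux:
  assumes u: "u \<in> V" and v: "v \<in> V" and lt: "r u < r v"
  shows "lab u \<noteq> lab v"
proof -
  have duv: "d u \<le> d v" using key_less_d[OF u v r_less_key[OF u v lt]] .
  have uv: "u \<noteq> v" using lt by auto
  consider "u = a" | "u \<in> D1" | "u \<in> D2" | "u \<in> D3" using dcases[OF u] by blast
  then show ?thesis
  proof cases
    case 1
    then have "v \<noteq> a" using uv by simp
    then have "1 \<le> lab v" using lab_pos v by blast
    then show ?thesis using 1 lab_a by simp
  next
    case 2
    then have "v \<in> D1 \<or> v \<in> D2 \<or> v \<in> D3" using dcases[OF v] duv da by (auto simp: D1_def)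
    then show ?thesis
    proof (elim disjE)
      assume vD: "v \<in> D1"
      have "om u \<noteq> om v" using lt 2 vD by (auto simp: om_def D1_def)
      then show ?thesis using lab1 2 vD by simp
    next
      assume vD: "v \<in> D2"
      show ?thesis using eo[of "lab v" "lab u"] lab1b[OF 2] lab2b[OF vD] by metis
    next
      assume vD: "v \<in> D3"
      show ?thesis using lab1b[OF 2] lab3b[OF vD] by linarith
    qed
  next
    case 3
    then have "v \<in> D2 \<or> v \<in> D3" using dcases[OF v] duv da by (auto simp: D1_def D2_def)
    then show ?thesis
    proof (elim disjE)
      assume vD: "v \<in> D2"
      have "r (par u) \<le> r (par v)" using M1[OF 3 vD lt] .
      then have "om (par v) \<le> om (par u)" using D2_par[OF 3] D2_par[OF vD] by (auto simp: om_def D1_def)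
      moreover have "om u < om v" using lt 3 vD by (auto simp: om_def D2_def)
      ultimately show ?thesis using lab2[OF 3] lab2[OF vD] by simp
    next
      assume vD: "v \<in> D3"
      show ?thesis using eo[of "lab u" "lab v"] lab2b[OF 3] lab3b[OF vD] by metis
    qed
  next
    case 4
    then have vD: "v \<in> D3" using dcases[OF v] duv da by (auto simp: D1_def D2_def D3_def)
    have "r (par u) \<le> r (par v)" using M2[OF 4 vD lt] .
    then have "om (par u) \<le> om (par v)" using D3_par[OF 4] D3_par[OF vD] by (auto simp: om_def Q0_def)
    moreover have "om u < om v" using lt 4 vD by (auto simp: om_def D3_def)
    ultimately show ?thesis using lab3[OF 4] lab3[OF vD] by simp
  qed
qed

lemma lab_inj: "inj_on lab V"
proof (rule inj_onI)
  fix u v assume uv: "u \<in> V" "v \<in> V" "lab u = lab v"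
  show "u = v"
  proof (rule ccontr)
    assume "u \<noteq> v"
    then have "r u \<noteq> r v" using r_inj uv by (meson inj_on_def)
    then have "r u < r v \<or> r v < r u" by auto
    then show False using lab_inj_aux uv by metis
  qed
qed

end

context comb2
begin

lemma wt: assumes v: "v \<in> V" "v \<noteq> a" shows "\<bar>lab v - lab (par v)\<bar> = om v"
proof -
  have pv: "par v \<in> V" "d (par v) + 1 = d v" using parV[OF v] by auto
  have o: "1 \<le> om v"
  proof (cases "d v = 1")
    case True then show ?thesis using O1[of v] v n_eq by (simp add: D1_def)
  next
    case False then show ?thesis using O2[of v] v dpos[OF v] by simp
  qed
  have "v \<in> D1 \<or> v \<in> D2 \<or> v \<in> D3" using dcases[OF v(1)] v(2) by blast
  then show ?thesis
  proof (elim disjE)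
    assume vD: "v \<in> D1"
    then have "par v = a" using p1 v by (simp add: D1_def)
    then show ?thesis using lab1[OF vD] lab_a o by simp
  next
    assume vD: "v \<in> D2"
    then have "par v \<in> D1" by (rule D2_par)
    then show ?thesis using lab1 lab2[OF vD] o by simp
  next
    assume vD: "v \<in> D3"
    then have "par v \<in> D2" using D3_par Q0_D2 by blast
    moreover have "par (par v) = b" using d3b vD by (simp add: D3_def)
    ultimately show ?thesis using lab2 lab3[OF vD] o by simp
  qed
qed

lemma om_bounds: assumes v: "v \<in> V" "v \<noteq> a" shows "1 \<le> om v \<and> om v \<le> 2 * int n - 1"
proof (cases "d v = 1")
  case True then show ?thesis using O1[of v] v n_eq by (simp add: D1_def)
next
  case False then show ?thesis using O2[of v] v dpos[OF v] by simp
qed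

lemma om_inj: "inj_on om (V - {a})"
proof (rule inj_onI)
  fix u v assume uv: "u \<in> V - {a}" "v \<in> V - {a}" "om u = om v"
  have ri: "r u = r v \<Longrightarrow> u = v" using r_inj uv by (meson DiffD1 inj_on_def)
  show "u = v"
  proof (cases "d u = 1"; cases "d v = 1")
    assume "d u = 1" "d v = 1" then show ?thesis using uv ri by (simp add: om_def)
  next
    assume "d u \<noteq> 1" "d v \<noteq> 1" then show ?thesis using uv ri by (simp add: om_def)
  next
    assume h: "d u = 1" "d v \<noteq> 1"
    then have "2 \<le> d v" using dpos[of v] uv by fastforce
    then show ?thesis using O1[of u] O2[of v] h uv by (simp add: D1_def)
  next
    assume h: "d u \<noteq> 1" "d v = 1"
    then have "2 \<le> d u" using dpos[of u] uv by fastforce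
    then show ?thesis using O1[of v] O2[of u] h uv by (simp add: D1_def)
  qed
qed

lemma odds_card: "card {2 * k + 1 | k. k < m} = m"
proof -
  have "{2 * k + 1 | k. k < m} = (\<lambda>k. 2 * k + 1) ` {..<m}" by auto
  moreover have "inj_on (\<lambda>k::nat. 2 * k + 1) {..<m}" by (auto simp: inj_on_def)
  ultimately show ?thesis by (simp add: card_image)
qed

lemma om_img: "(\<lambda>v. nat (om v)) ` (V - {a}) = {2 * k + 1 | k. k < n}"
proof (rule card_subset_eq)
  show "finite {2 * k + 1 | k. k < n}" by simp
  show "(\<lambda>v. nat (om v)) ` (V - {a}) \<subseteq> {2 * k + 1 | k. k < n}"
  proof
    fix x assume "x \<in> (\<lambda>v. nat (om v)) ` (V - {a})"
    then obtain v where v: "v \<in> V" "v \<noteq> a" "x = nat (om v)" by auto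
    have b: "1 \<le> om v" "om v \<le> 2 * int n - 1" using om_bounds[OF v(1,2)] by auto
    obtain k where k: "om v = 2 * k + 1" using om_odd[of v] by (metis oddE)
    have "0 \<le> k" "k < int n" using b k by auto
    then have "x = 2 * nat k + 1" "nat k < n" using v(3) k by auto
    then show "x \<in> {2 * k + 1 | k. k < n}" by blast
  qed
  have inj: "inj_on (\<lambda>v. nat (om v)) (V - {a})"
  proof (rule inj_onI)
    fix u v assume uv: "u \<in> V - {a}" "v \<in> V - {a}" "nat (om u) = nat (om v)"
    then have "om u = om v" using om_bounds by (metis DiffE eq_nat_nat_iff insertI1 le_numeral_extra(1) order_trans zero_le_one)
    then show "u = v" using om_inj uv by (meson inj_on_def)
  qed
  have "card ((\<lambda>v. nat (om v)) ` (V - {a})) = card (V - {a})" using card_image[OF inj] .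
  also have "\<dots> = n" using fin aV cardV_n by simp
  finally show "card ((\<lambda>v. nat (om v)) ` (V - {a})) = card {2 * k + 1 | k. k < n}"
    using odds_card by simp
qed

lemma edge_inj: "inj_on (\<lambda>v. {v, par v}) (V - {a})"
proof (rule inj_onI)
  fix u v assume uv: "u \<in> V - {a}" "v \<in> V - {a}" "{u, par u} = {v, par v}"
  show "u = v"
  proof (rule ccontr)
    assume "u \<noteq> v"
    then have h: "u = par v" "par u = v" using uv(3) by (auto simp: doubleton_eq_iff)
    have "d (par u) + 1 = d u" "d (par v) + 1 = d v" using parV uv(1,2) by blast+
    then show False using h by simp
  qed
qed

theorem og: "odd_graceful V ((\<lambda>v. {v, par v}) ` (V - {a}))"
proof -
  define E where "E = (\<lambda>v. {v, par v}) ` (V - {a})"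
  have cE: "card E = n" unfolding E_def using card_image[OF edge_inj] fin aV cardV_n by simp
  define f where "f v = nat (lab v)" for v
  have fi: "int (f v) = lab v" if "v \<in> V" for v using lab_nonneg[OF that] by (simp add: f_def)
  have "inj_on f V"
  proof (rule inj_onI)
    fix u v assume "u \<in> V" "v \<in> V" "f u = f v"
    then have "lab u = lab v" using fi by metis
    then show "u = v" using lab_inj \<open>u \<in> V\<close> \<open>v \<in> V\<close> by (meson inj_on_def)
  qed
  moreover have "f ` V \<subseteq> {0 ..< 2 * card E}"
  proof
    fix x assume "x \<in> f ` V"
    then obtain v where v: "v \<in> V" "x = f v" by auto
    have "lab v \<le> 2 * int n - 1" using lab_le[OF v(1)] .
    then have "int x < 2 * int n" using fi v by simp
    then show "x \<in> {0 ..< 2 * card E}" using cE by simp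
  qed
  moreover have "{nat \<bar>int (f x) - int (f y)\<bar> | x y. {x, y} \<in> E} = {2 * k + 1 | k. k < card E}"
  proof -
    have "{nat \<bar>int (f x) - int (f y)\<bar> | x y. {x, y} \<in> E} = (\<lambda>v. nat (om v)) ` (V - {a})"
    proof
      show "{nat \<bar>int (f x) - int (f y)\<bar> | x y. {x, y} \<in> E} \<subseteq> (\<lambda>v. nat (om v)) ` (V - {a})"
      proof
        fix w assume "w \<in> {nat \<bar>int (f x) - int (f y)\<bar> | x y. {x, y} \<in> E}"
        then obtain x y where xy: "w = nat \<bar>int (f x) - int (f y)\<bar>" "{x, y} \<in> E" by blast
        then obtain v where v: "v \<in> V" "v \<noteq> a" "{x, y} = {v, par v}" unfolding E_def by blast
        have pv: "par v \<in> V" using pV v by blast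
        have "(x = v \<and> y = par v) \<or> (x = par v \<and> y = v)" using v(3) by (auto simp: doubleton_eq_iff)
        then have "w = nat \<bar>lab v - lab (par v)\<bar>"
          using xy(1) fi v(1) pv by (auto simp: abs_minus_commute)
        then have "w = nat (om v)" using wt[OF v(1,2)] by simp
        then show "w \<in> (\<lambda>v. nat (om v)) ` (V - {a})" using v by blast
      qed
    next
      show "(\<lambda>v. nat (om v)) ` (V - {a}) \<subseteq> {nat \<bar>int (f x) - int (f y)\<bar> | x y. {x, y} \<in> E}"
      proof
        fix w assume "w \<in> (\<lambda>v. nat (om v)) ` (V - {a})"
        then obtain v where v: "v \<in> V" "v \<noteq> a" "w = nat (om v)" by auto
        have pv: "par v \<in> V" using pV v by blast
        have "w = nat \<bar>int (f v) - int (f (par v))\<bar>" using wt[OF v(1,2)] fi v(1) pv v(3) by simp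
        moreover have "{v, par v} \<in> E" using v unfolding E_def by blast
        ultimately show "w \<in> {nat \<bar>int (f x) - int (f y)\<bar> | x y. {x, y} \<in> E}" by blast
      qed
    qed
    then show ?thesis using om_img cE by simp
  qed
  ultimately show ?thesis unfolding odd_graceful_def E_def[symmetric] by blast
qed

end

context rtree
begin

lemma par_par_ne: assumes "x \<in> V" "x \<noteq> a" "r \<in> V" "r \<noteq> a" "par x = r" "par r = x" shows False
proof -
  have "d (par x) + 1 = d x" "d (par r) + 1 = d r" using par assms by blast+
  then show False using assms by simp
qed

lemma kids_eq:
  assumes rV: "r \<in> V" and rs: "r = a \<or> (r \<noteq> a \<and> s = par r)"
  shows "{x \<in> V - {a}. par x = r \<and> x \<noteq> s \<and> (\<exists>c\<in>V-{a}. par c = x)}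
       = {x\<in>V. {r,x}\<in>E \<and> x \<noteq> s \<and> (\<exists>c\<in>V. {x,c}\<in>E \<and> c \<noteq> r)}"
proof
  show "{x \<in> V - {a}. par x = r \<and> x \<noteq> s \<and> (\<exists>c\<in>V-{a}. par c = x)}
       \<subseteq> {x\<in>V. {r,x}\<in>E \<and> x \<noteq> s \<and> (\<exists>c\<in>V. {x,c}\<in>E \<and> c \<noteq> r)}"
  proof
    fix x assume "x \<in> {x \<in> V - {a}. par x = r \<and> x \<noteq> s \<and> (\<exists>c\<in>V-{a}. par c = x)}"
    then have x: "x \<in> V" "x \<noteq> a" "par x = r" "x \<noteq> s" and "\<exists>c\<in>V-{a}. par c = x" by auto
    then obtain c where c: "c \<in> V" "c \<noteq> a" "par c = x" by auto
    have e1: "{r, x} \<in> E" using adj_char[of r x] x by blast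
    have e2: "{x, c} \<in> E" using adj_char[of x c] c by blast
    have "c \<noteq> r" using par_par_ne[OF x(1,2) c(1,2)] x c by blast
    then show "x \<in> {x\<in>V. {r,x}\<in>E \<and> x \<noteq> s \<and> (\<exists>c\<in>V. {x,c}\<in>E \<and> c \<noteq> r)}"
      using x e1 e2 c by blast
  qed
next
  show "{x\<in>V. {r,x}\<in>E \<and> x \<noteq> s \<and> (\<exists>c\<in>V. {x,c}\<in>E \<and> c \<noteq> r)}
      \<subseteq> {x \<in> V - {a}. par x = r \<and> x \<noteq> s \<and> (\<exists>c\<in>V-{a}. par c = x)}"
  proof
    fix x assume "x \<in> {x\<in>V. {r,x}\<in>E \<and> x \<noteq> s \<and> (\<exists>c\<in>V. {x,c}\<in>E \<and> c \<noteq> r)}"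
    then have x: "x \<in> V" "{r,x}\<in>E" "x \<noteq> s" and "\<exists>c\<in>V. {x,c}\<in>E \<and> c \<noteq> r" by auto
    then obtain c where c: "c \<in> V" "{x,c}\<in>E" "c \<noteq> r" by auto
    have "(r \<in> V \<and> r \<noteq> a \<and> x = par r) \<or> (x \<in> V \<and> x \<noteq> a \<and> par x = r)"
      using adj_char[of r x] x(2) by blast
    then have xa: "x \<noteq> a" "par x = r" using rs x(3) by auto
    have "(x \<in> V \<and> x \<noteq> a \<and> c = par x) \<or> (c \<in> V \<and> c \<noteq> a \<and> par c = x)"
      using adj_char[of x c] c(2) by blast
    then have "c \<noteq> a" "par c = x" using xa c(3) by auto
    then show "x \<in> {x \<in> V - {a}. par x = r \<and> x \<noteq> s \<and> (\<exists>c\<in>V-{a}. par c = x)}"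
      using x xa c by blast
  qed
qed

lemma og_root:
  assumes bV: "b \<in> V" and db: "d b = 1" and pb: "par b = a"
    and dd: "\<forall>v\<in>V. d v \<le> 3 \<and> (d v = 3 \<longrightarrow> par (par v) = b)"
    and cnt: "card {x\<in>V. {b,x}\<in>E \<and> x \<noteq> a \<and> (\<exists>c\<in>V. {x,c}\<in>E \<and> c \<noteq> b)}
             \<le> card {x\<in>V. {a,x}\<in>E \<and> x \<noteq> b \<and> (\<exists>c\<in>V. {x,c}\<in>E \<and> c \<noteq> a)} + 1"
  shows "odd_graceful V E"
proof -
  obtain g :: "'a \<Rightarrow> nat" where g: "inj_on g V"
    using finite_imp_inj_to_nat_seg[OF finV] by blast
  have ba: "b \<noteq> a" using db d_a by auto
  interpret C: comb V a b par d g
    by unfold_locales (use finV aV bV d_a db pb par dd g in auto)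
  have k1: "{x \<in> V - {a}. par x = b \<and> x \<noteq> a \<and> (\<exists>c\<in>V-{a}. par c = x)}
       = {x\<in>V. {b,x}\<in>E \<and> x \<noteq> a \<and> (\<exists>c\<in>V. {x,c}\<in>E \<and> c \<noteq> b)}"
    using kids_eq[OF bV] ba pb by simp
  have k2: "{x \<in> V - {a}. par x = a \<and> x \<noteq> b \<and> (\<exists>c\<in>V-{a}. par c = x)}
       = {x\<in>V. {a,x}\<in>E \<and> x \<noteq> b \<and> (\<exists>c\<in>V. {x,c}\<in>E \<and> c \<noteq> a)}"
    using kids_eq[OF aV] by simp
  interpret C2: comb2 V a b par d g
    by unfold_locales (use cnt k1 k2 C.NP_eq C.Q0_eq in simp)
  show ?thesis using C2.og E_eq by simp
qed

end

theorem theorem4: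
  fixes V :: "'a set" and E :: "'a set set"
  assumes "is_tree V E" and "diameter V E = 5"
  shows "odd_graceful V E"
proof -
  have sg: "simple_graph V E" and cg: "connected_graph V E" using assms(1) by (auto simp: is_tree_def)
  have fin: "finite V" using sg by (simp add: simple_graph_def)
  have Vne: "V \<noteq> {}" using cg by (simp add: connected_graph_def)
  define S where "S = {graph_dist V E u v | u v. u \<in> V \<and> v \<in> V}"
  have "S = (\<lambda>(u, v). graph_dist V E u v) ` (V \<times> V)" unfolding S_def by auto
  then have finS: "finite S" using fin by simp
  have Sne: "S \<noteq> {}" using Vne unfolding S_def by auto
  have mx: "Max S = 5" using assms(2) unfolding diameter_def S_def by simp
  have "5 \<in> S" using Max_in[OF finS Sne] mx by simp
  then obtain u v where uv: "u \<in> V" "v \<in> V" "graph_dist V E u v = 5" unfolding S_def by auto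
  have maxd: "\<forall>x\<in>V. \<forall>y\<in>V. graph_dist V E x y \<le> 5"
  proof (intro ballI)
    fix x y assume "x \<in> V" "y \<in> V"
    then have "graph_dist V E x y \<in> S" unfolding S_def by auto
    then show "graph_dist V E x y \<le> 5" using Max_ge[OF finS] mx by metis
  qed
  obtain P where P: "is_walk V E P" "hd P = u" "last P = v" "length P = 6"
    using dist_walk[OF cg uv(1,2)] uv(3) by auto
  have Pne: "P \<noteq> []" using P(4) by auto
  have "hd P = P ! 0" "last P = P ! 5" using Pne P(4) by (simp_all add: hd_conv_nth last_conv_nth)
  then have P05: "P ! 0 = u" "P ! 5 = v" using P(2,3) by simp_all
  have PV: "\<And>i. i < 6 \<Longrightarrow> P ! i \<in> V" using P by (auto simp: is_walk_def)
  interpret A: rtree V E "P ! 2" by unfold_locales (use assms(1) PV in auto)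
  interpret B: rtree V E "P ! 3" by unfold_locales (use assms(1) PV in auto)
  have SA: "P ! 3 \<in> V \<and> A.d (P ! 3) = 1 \<and> A.par (P ! 3) = P ! 2 \<and>
         (\<forall>v\<in>V. A.d v \<le> 3 \<and> (A.d v = 3 \<longrightarrow> A.par (A.par v) = P ! 3))"
    by (rule A.struct5[OF P(1) P(4)]) (use uv P05 maxd in auto)
  define Q where "Q = rev P"
  have Q: "is_walk V E Q" "length Q = 6" using P walk_rev by (auto simp: Q_def)
  have Qi: "Q ! 0 = v" "Q ! 5 = u" "Q ! 2 = P ! 3" "Q ! 3 = P ! 2" using P P05
    by (auto simp: Q_def rev_nth)
  have SB: "Q ! 3 \<in> V \<and> B.d (Q ! 3) = 1 \<and> B.par (Q ! 3) = P ! 3 \<and>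
         (\<forall>v\<in>V. B.d v \<le> 3 \<and> (B.d v = 3 \<longrightarrow> B.par (B.par v) = Q ! 3))"
    by (rule B.struct5[OF Q(1) Q(2)]) (use uv Qi maxd dist_sym[OF cg uv(1,2)] in auto)
  define K where "K r s = {x\<in>V. {r,x}\<in>E \<and> x \<noteq> s \<and> (\<exists>c\<in>V. {x,c}\<in>E \<and> c \<noteq> r)}" for r s
  show ?thesis
  proof (cases "card (K (P!3) (P!2)) \<le> card (K (P!2) (P!3)) + 1")
    case True
    show ?thesis by (rule A.og_root[of "P ! 3"]) (use SA True in \<open>auto simp: K_def\<close>)
  next
    case False
    then have "card (K (P!2) (P!3)) \<le> card (K (P!3) (P!2)) + 1" by simp
    then show ?thesis by (intro B.og_root[of "P ! 2"]) (use SB Qi in \<open>auto simp: K_def\<close>)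
  qed
qed

end
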